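(* Let $v^1,\dots,v^p\in\mathbb{R}^n$ and let $\mathscr V\subset\mathbb{R}_{\max}^n$ be the max-plus cone they generate. If $y\in\mathbb{R}_{\max}^n$ does not belong to $\mathscr V$, then there exist disjoint sets $I,J$ with $I\cup J=\{1,\dots,n\}$ and $a\in\mathbb{R}^n$ such that the half-space $\{x\in\mathbb{R}_{\max}^n:\bigoplus_{i\in I}a_ix_i\le\bigoplus_{j\in J}a_jx_j\}$ contains $\mathscr V$ but not $y$, and its apex $-a$ is a vertex of the natural cell decomposition of $\mathbb{R}_{\max}^n$ induced by $v^1,\dots,v^p$.
   Context: $\mathbb{R}_{\max}=\mathbb{R}\cup\{-\infty\}$ with $a\oplus b=\max(a,b)$, $ab=a+b$; the max-plus cone generated by $v^1,\dots,v^p$ is $\{\bigoplus_r\lambda_rv^r:\lambda_r\in\mathbb{R}_{\max}\}$, where $(\lambda v)_k=\lambda+v_k$. The apex of the half-space $\{x:\bigoplus_{i\in I}a_ix_i\le\bigoplus_{j\in J}a_jx_j\}$ (with $I,J$ a partition of $\{1,\dots,n\}$ and $a\in\mathbb{R}^n$) is $-a$. For $x\in\mathbb{R}^n$, the type of $x$ is $(S_1(x),\dots,S_n(x))$ with $S_j(x)=\{r: v^r_j-x_j=\max_{k}(v^r_k-x_k)\}$. For an $n$-tuple $S=(S_1,\dots,S_n)$ of subsets of $\{1,\dots,p\}$, the cell $X_S=\{x: S_j\subset S_j(x)\ \forall j\}$; the natural cell decomposition is the collection of cells $X_S$, $S$ ranging over types. A vertex of this decomposition is a vector $x\in\mathbb{R}^n$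 whose cell $X_{\mathrm{type}(x)}$ is one-dimensional, i.e. equals $\{\lambda+x:\lambda\in\mathbb{R}\}$ (equivalently, the graph on $\{1,\dots,n\}$ with an edge $\{i,j\}$ whenever $S_i(x)\cap S_j(x)\neq\emptyset$ is connected). *)

theory Defs
  imports "HOL-Analysis.Analysis"
begin

text \<open>Max-plus semiring R_max = R union {-infinity}, modelled inside ereal:
  an element of R_max^n is a vector x :: ereal^'n with no component equal to +infinity.\<close>

definition rmax_vec :: "(ereal^'n) set" where
  "rmax_vec = {x. \<forall>k. x $ k \<noteq> \<infinity>}"

definition mp_cone :: "('p::finite \<Rightarrow> real^'n) \<Rightarrow> (ereal^'n) set" where
  "mp_cone v = {x. \<exists>lam :: 'p \<Rightarrow> ereal. (\<forall>r. lam r \<noteq> \<infinity>) \<and>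
                    x = (\<chi> k. (SUP r. lam r + ereal (v r $ k)))}"

definition mp_halfspace :: "'n set \<Rightarrow> 'n set \<Rightarrow> real^'n \<Rightarrow> (ereal^'n) set" where
  "mp_halfspace I J a = {x \<in> rmax_vec.
      (SUP i\<in>I. ereal (a $ i) + x $ i) \<le> (SUP j\<in>J. ereal (a $ j) + x $ j)}"

definition mp_type :: "('p::finite \<Rightarrow> real^'n) \<Rightarrow> real^'n \<Rightarrow> 'n::finite \<Rightarrow> 'p set" where
  "mp_type v x j = {r. v r $ j - x $ j = (MAX k. v r $ k - x $ k)}"

definition mp_cell :: "('p::finite \<Rightarrow> real^'n) \<Rightarrow> ('n::finite \<Rightarrow> 'p set) \<Rightarrow> (real^'n) set" where
  "mp_cell v S = {x. \<forall>j. S j \<subseteq> mp_type v x j}"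

definition mp_vertex :: "('p::finite \<Rightarrow> real^'n) \<Rightarrow> real^'n::finite \<Rightarrow> bool" where
  "mp_vertex v x \<longleftrightarrow> mp_cell v (mp_type v x) = {z. \<exists>lam::real. z = (\<chi> k. lam + x $ k)}"

end

theory Submission
  imports Defs
begin


definition mx :: "('p::finite \<Rightarrow> real^'n::finite) \<Rightarrow> real^'n \<Rightarrow> 'p \<Rightarrow> real" where
  "mx v c r = (MAX k. v r $ k - c $ k)"

lemma type_iff: "r \<in> mp_type v c k \<longleftrightarrow> v r $ k - c $ k = mx v c r"
  by (simp add: mp_type_def mx_def)

lemma mx_ge: "v r $ k - c $ k \<le> mx v c r"
  unfolding mx_def by (rule Max_ge) auto

lemma mx_attain: "\<exists>k. v r $ k - c $ k = mx v c r"
proof -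
  have "mx v c r \<in> range (\<lambda>k. v r $ k - c $ k)" unfolding mx_def by (rule Max_in) auto
  then show ?thesis by (metis (no_types, lifting) imageE)
qed

lemma mx_eqI: assumes "\<And>k. v r $ k - c $ k \<le> m" "v r $ k0 - c $ k0 = m" shows "mx v c r = m"
  unfolding mx_def
proof (rule Max_eqI)
  show "m \<in> range (\<lambda>k. v r $ k - c $ k)" by (rule image_eqI[where x=k0]) (use assms(2) in auto)
qed (use assms(1) in auto)

definition ym :: "'n set \<Rightarrow> ('n \<Rightarrow> real) \<Rightarrow> real^'n::finite \<Rightarrow> real" where
  "ym K f c = Max ((\<lambda>k. f k - c $ k) ` K)"

definition yM :: "'n set \<Rightarrow> ('n \<Rightarrow> real) \<Rightarrow> real^'n::finite \<Rightarrow> 'n set" where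
  "yM K f c = {k\<in>K. f k - c $ k = ym K f c}"

lemma ym_ge: "k \<in> K \<Longrightarrow> f k - c $ k \<le> ym K f c"
  unfolding ym_def by (rule Max_ge) auto

lemma ym_attain: "K \<noteq> {} \<Longrightarrow> \<exists>k\<in>K. f k - c $ k = ym K f c"
proof -
  assume "K \<noteq> {}"
  then have "ym K f c \<in> (\<lambda>k. f k - c $ k) ` K" unfolding ym_def by (intro Max_in) auto
  then show ?thesis by (metis (no_types, lifting) imageE)
qed

lemma ym_eqI: assumes "\<And>k. k \<in> K \<Longrightarrow> f k - c $ k \<le> m" "k0 \<in> K" "f k0 - c $ k0 = m" shows "ym K f c = m"
  unfolding ym_def
proof (rule Max_eqI)
  show "m \<in> (\<lambda>k. f k - c $ k) ` K" by (rule image_eqI[where x=k0]) (use assms in auto)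
qed (use assms(1) in auto)

lemma yM_ne: "K \<noteq> {} \<Longrightarrow> yM K f c \<noteq> {}"
  using ym_attain[of K f c] unfolding yM_def by auto

definition good :: "('p::finite \<Rightarrow> real^'n::finite) \<Rightarrow> 'n set \<Rightarrow> ('n \<Rightarrow> real) \<Rightarrow> real^'n \<Rightarrow> bool" where
  "good v K f c \<longleftrightarrow> (\<forall>r. \<exists>k. r \<in> mp_type v c k \<and> k \<notin> yM K f c)"

definition tsz :: "('p::finite \<Rightarrow> real^'n::finite) \<Rightarrow> real^'n \<Rightarrow> nat" where
  "tsz v c = (\<Sum>k\<in>UNIV. card (mp_type v c k))"

definition mu :: "('p::finite \<Rightarrow> real^'n::finite) \<Rightarrow> 'n set \<Rightarrow> ('n \<Rightarrow> real) \<Rightarrow> real^'n \<Rightarrow> nat" where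
  "mu v K f c = (CARD('n) + 1) * tsz v c + card (yM K f c)"

definition closedset :: "('p::finite \<Rightarrow> real^'n::finite) \<Rightarrow> real^'n \<Rightarrow> 'n set \<Rightarrow> bool" where
  "closedset v c A \<longleftrightarrow> (\<forall>r i j. r \<in> mp_type v c i \<longrightarrow> r \<in> mp_type v c j \<longrightarrow> (i \<in> A \<longleftrightarrow> j \<in> A))"

lemma mu_bound:
  fixes v :: "'p::finite \<Rightarrow> real^'n::finite"
  shows "mu v K f c \<le> (CARD('n) + 1) * (CARD('n) * CARD('p)) + CARD('n)"
proof -
  have "tsz v c \<le> CARD('n) * CARD('p)"
  proof -
    have "tsz v c \<le> (\<Sum>k\<in>(UNIV::'n set). CARD('p))"
      unfolding tsz_def by (intro sum_mono card_mono) auto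
    then show ?thesis by simp
  qed
  moreover have "card (yM K f c) \<le> CARD('n)" by (rule card_mono) auto
  ultimately show ?thesis unfolding mu_def
    by (intro add_le_mono mult_le_mono2) auto
qed

lemma shift_type: "mp_type v (\<chi> k. lam + c $ k) = mp_type v c"
proof (intro ext)
  fix j
  have "mx v (\<chi> k. lam + c $ k) r = mx v c r - lam" for r
  proof -
    obtain k0 where "v r $ k0 - c $ k0 = mx v c r" using mx_attain by blast
    show ?thesis
    proof (rule mx_eqI)
      fix k
      have "v r $ k - c $ k \<le> mx v c r" by (rule mx_ge)
      then show "v r $ k - (\<chi> k. lam + c $ k) $ k \<le> mx v c r - lam" by simp
    qed (use \<open>v r $ k0 - c $ k0 = mx v c r\<close> in simp)
  qed
  then show "mp_type v (\<chi> k. lam + c $ k) j = mp_type v c j"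
    by (auto simp: type_iff algebra_simps)
qed

lemma nonvertex_closed:
  assumes "\<not> mp_vertex v c"
  shows "\<exists>A. A \<noteq> {} \<and> A \<noteq> UNIV \<and> closedset v c A"
proof -
  let ?L = "{z. \<exists>lam::real. z = (\<chi> k. lam + c $ k)}"
  have "?L \<subseteq> mp_cell v (mp_type v c)"
    by (auto simp: mp_cell_def shift_type)
  with assms obtain x where x: "x \<in> mp_cell v (mp_type v c)" "x \<notin> ?L"
    unfolding mp_vertex_def by blast
  define d where "d k = x $ k - c $ k" for k
  define m0 where "m0 = Min (range d)"
  define A where "A = {k. d k = m0}"
  have "m0 \<in> range d" unfolding m0_def by (rule Min_in) auto
  then have "A \<noteq> {}" unfolding A_def by auto
  moreover have "A \<noteq> UNIV"
  proof
    assume "A = UNIV"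
    then have "k \<in> A" for k by simp
    then have h: "x $ k - c $ k = m0" for k unfolding A_def d_def by simp
    have "x = (\<chi> k. m0 + c $ k)"
    proof (rule vec_eq_iff[THEN iffD2], rule allI)
      fix i show "x $ i = (\<chi> k. m0 + c $ k) $ i" using h[of i] by simp
    qed
    then show False using x(2) by blast
  qed
  moreover have "closedset v c A"
    unfolding closedset_def
  proof (intro allI impI)
    fix r i j assume ri: "r \<in> mp_type v c i" and rj: "r \<in> mp_type v c j"
    then have "r \<in> mp_type v x i" "r \<in> mp_type v x j" using x(1) by (auto simp: mp_cell_def)
    then have "d i = d j" using ri rj unfolding d_def type_iff by (simp add: algebra_simps)
    then show "i \<in> A \<longleftrightarrow> j \<in> A" unfolding A_def by simp
  qed
  ultimately show ?thesis by blast
qed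



lemma closed_dich:
  assumes "closedset v c A" "\<not> (\<forall>k. r \<in> mp_type v c k \<longrightarrow> k \<in> A)"
  shows "\<forall>k. r \<in> mp_type v c k \<longrightarrow> k \<notin> A"
proof -
  obtain i where i: "r \<in> mp_type v c i" "i \<notin> A" using assms(2) by blast
  show ?thesis
  proof (intro allI impI)
    fix k assume k: "r \<in> mp_type v c k"
    have "r \<in> mp_type v c i \<longrightarrow> r \<in> mp_type v c k \<longrightarrow> (i \<in> A \<longleftrightarrow> k \<in> A)"
      using assms(1) unfolding closedset_def by (elim allE)
    then have "i \<in> A \<longleftrightarrow> k \<in> A" using i(1) k by simp
    then show "k \<notin> A" using i(2) by simp
  qed
qed

lemma closed_compl: assumes "closedset v c A" shows "closedset v c (- A)"
  unfolding closedset_def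
proof (intro allI impI)
  fix r i j assume h: "r \<in> mp_type v c i" "r \<in> mp_type v c j"
  have "r \<in> mp_type v c i \<longrightarrow> r \<in> mp_type v c j \<longrightarrow> (i \<in> A \<longleftrightarrow> j \<in> A)"
    using assms(1) unfolding closedset_def by (elim allE)
  then have "i \<in> A \<longleftrightarrow> j \<in> A" using h by simp
  then show "i \<in> - A \<longleftrightarrow> j \<in> - A" by simp
qed

lemma type_ex: "\<exists>k. r \<in> mp_type v c k"
  using mx_attain[of v r c] by (simp add: type_iff)

lemma choose:
  assumes Kne: "K \<noteq> {}" and "A \<noteq> {}" "A \<noteq> UNIV" and cl: "closedset v c A"
  shows "\<exists>A'. A' \<noteq> UNIV \<and> closedset v c A' \<and> (\<exists>r0. \<forall>k. r0 \<in> mp_type v c k \<longrightarrow> k \<in> A') \<and>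
     (\<not> yM K f c \<subseteq> A' \<or> (yM K f c \<subseteq> A' \<and> (\<forall>r k. r \<in> mp_type v c k \<longrightarrow> k \<in> A')))"
proof -
  have dich: "(\<forall>k. r \<in> mp_type v c k \<longrightarrow> k \<in> A) \<or> (\<forall>k. r \<in> mp_type v c k \<longrightarrow> k \<in> - A)" for r
  proof (cases "\<forall>k. r \<in> mp_type v c k \<longrightarrow> k \<in> A")
    case False
    then have "\<forall>k. r \<in> mp_type v c k \<longrightarrow> k \<notin> A" by (rule closed_dich[OF cl])
    then show ?thesis by simp
  qed simp
  have Mne: "yM K f c \<noteq> {}" using yM_ne[OF Kne] .
  have clc: "closedset v c (- A)" using closed_compl[OF cl] .
  have cU: "- A \<noteq> UNIV" using assms(2) by auto
  show ?thesis
  proof (cases "\<exists>r. (\<forall>k. r \<in> mp_type v c k \<longrightarrow> k \<in> A) \<and> \<not> yM K f c \<subseteq> A")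
    case True
    then obtain r where "\<forall>k. r \<in> mp_type v c k \<longrightarrow> k \<in> A" "\<not> yM K f c \<subseteq> A" by blast
    then show ?thesis using assms(3) cl by (intro exI[of _ A]) blast
  next
    case F1: False
    show ?thesis
    proof (cases "\<exists>r. (\<forall>k. r \<in> mp_type v c k \<longrightarrow> k \<in> - A) \<and> \<not> yM K f c \<subseteq> - A")
      case True
      then obtain r where "\<forall>k. r \<in> mp_type v c k \<longrightarrow> k \<in> - A" "\<not> yM K f c \<subseteq> - A" by blast
      then show ?thesis using cU clc by (intro exI[of _ "- A"]) blast
    next
      case F2: False
      show ?thesis
      proof (cases "\<exists>r. \<forall>k. r \<in> mp_type v c k \<longrightarrow> k \<in> A")
        case True
        then obtain r1 where r1: "\<forall>k. r1 \<in> mp_type v c k \<longrightarrow> k \<in> A" by blast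
        then have MA: "yM K f c \<subseteq> A" using F1 by blast
        have all: "\<forall>r k. r \<in> mp_type v c k \<longrightarrow> k \<in> A"
        proof (rule allI)
          fix r
          show "\<forall>k. r \<in> mp_type v c k \<longrightarrow> k \<in> A"
          proof (rule ccontr)
            assume "\<not> (\<forall>k. r \<in> mp_type v c k \<longrightarrow> k \<in> A)"
            then have "\<forall>k. r \<in> mp_type v c k \<longrightarrow> k \<in> - A" using dich[of r] by blast
            then have "yM K f c \<subseteq> - A" using F2 by blast
            then show False using MA Mne by blast
          qed
        qed
        show ?thesis using assms(3) cl r1 MA all by (intro exI[of _ A]) blast
      next
        case False
        then have all: "\<forall>r k. r \<in> mp_type v c k \<longrightarrow> k \<in> - A" using dich by blast
        then have "yM K f c \<subseteq> - A" using F2 by blast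
        then show ?thesis using cU clc all by (intro exI[of _ "- A"]) blast
      qed
    qed
  qed
qed

lemma tsz_mono:
  assumes "\<And>k r. r \<in> mp_type v c k \<Longrightarrow> r \<in> mp_type v c' k"
  shows "tsz v c \<le> tsz v c'"
  unfolding tsz_def
proof (rule sum_mono)
  fix k show "card (mp_type v c k) \<le> card (mp_type v c' k)"
    by (rule card_mono) (use assms in auto)
qed

lemma tsz_strict:
  assumes "\<And>k r. r \<in> mp_type v c k \<Longrightarrow> r \<in> mp_type v c' k"
    and "r \<in> mp_type v c' k" "r \<notin> mp_type v c k"
  shows "tsz v c < tsz v c'"
  unfolding tsz_def
proof (rule sum_strict_mono_ex1)
  show "\<forall>k\<in>UNIV. card (mp_type v c k) \<le> card (mp_type v c' k)"
    using assms(1) by (intro ballI card_mono) auto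
  have "mp_type v c k \<subset> mp_type v c' k" using assms by blast
  then have "card (mp_type v c k) < card (mp_type v c' k)" by (intro psubset_card_mono) auto
  then show "\<exists>a\<in>UNIV. card (mp_type v c a) < card (mp_type v c' a)" by blast
qed simp

lemma mu_lt1:
  fixes v :: "'p::finite \<Rightarrow> real^'n::finite"
  assumes "tsz v c < tsz v c'"
  shows "mu v K f c < mu v K f' c'"
proof -
  let ?N = "CARD('n)"
  have "card (yM K f c) \<le> ?N" by (rule card_mono) auto
  then have "mu v K f c \<le> (?N + 1) * tsz v c + ?N" unfolding mu_def by simp
  also have "\<dots> < (?N + 1) * (tsz v c + 1)" by simp
  also have "\<dots> \<le> (?N + 1) * tsz v c'" using assms by (intro mult_le_mono2) simp
  also have "\<dots> \<le> mu v K f' c'" unfolding mu_def by simp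
  finally show ?thesis .
qed

lemma mu_lt2:
  assumes "tsz v c \<le> tsz v c'" "card (yM K f c) < card (yM K f c')"
  shows "mu v K f c < mu v K f c'"
  unfolding mu_def by (rule add_le_less_mono[OF mult_le_mono2[OF assms(1)] assms(2)])



lemma step:
  fixes v :: "'p::finite \<Rightarrow> real^'n::finite"
  assumes Kne: "K \<noteq> {}" and g: "good v K f c" and AU: "A \<noteq> UNIV" and cl: "closedset v c A"
    and r0: "\<forall>k. r0 \<in> mp_type v c k \<longrightarrow> k \<in> A"
    and cs: "\<not> yM K f c \<subseteq> A \<or> (yM K f c \<subseteq> A \<and> (\<forall>r k. r \<in> mp_type v c k \<longrightarrow> k \<in> A))"
  shows "\<exists>c'. good v K f c' \<and> mu v K f c < mu v K f c'"
proof -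
  define Tin where "Tin r \<longleftrightarrow> (\<forall>k. r \<in> mp_type v c k \<longrightarrow> k \<in> A)" for r
  define M where "M = yM K f c"
  define E1 where "E1 = (\<lambda>(r,k). mx v c r - (v r $ k - c $ k)) ` {(r,k). Tin r \<and> k \<notin> A}"
  define E2 where "E2 = (if M \<subseteq> A then (\<lambda>k. ym K f c - (f k - c $ k)) ` (K - A) else {})"
  define E where "E = E1 \<union> E2"
  define t where "t = Min E"
  have finE: "finite E" unfolding E_def E1_def E2_def by simp
  obtain k1 where k1: "k1 \<notin> A" using AU by blast
  have "mx v c r0 - (v r0 $ k1 - c $ k1) \<in> E1"
    unfolding E1_def by (rule image_eqI[where x="(r0,k1)"]) (use r0 k1 in \<open>simp_all add: Tin_def\<close>)
  then have Ene: "E \<noteq> {}" unfolding E_def by blast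
  have E1pos: "0 < e" if eE: "e \<in> E1" for e
  proof -
    obtain r k where rk: "Tin r" "k \<notin> A" "e = mx v c r - (v r $ k - c $ k)"
      using eE unfolding E1_def by fastforce
    have "r \<notin> mp_type v c k" using rk(1,2) unfolding Tin_def by blast
    then have "v r $ k - c $ k \<noteq> mx v c r" by (simp add: type_iff)
    moreover have "v r $ k - c $ k \<le> mx v c r" by (rule mx_ge)
    ultimately show ?thesis using rk(3) by simp
  qed
  have E2pos: "0 < e" if eE: "e \<in> E2" for e
  proof -
    have MA: "M \<subseteq> A" using eE unfolding E2_def by (simp split: if_splits)
    obtain k where k: "k \<in> K" "k \<notin> A" "e = ym K f c - (f k - c $ k)"
      using eE MA unfolding E2_def by auto
    have "k \<notin> M" using MA k(2) by blast
    then have "f k - c $ k \<noteq> ym K f c" using k(1) unfolding M_def yM_def by simp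
    moreover have "f k - c $ k \<le> ym K f c" by (rule ym_ge[OF k(1)])
    ultimately show ?thesis using k(3) by simp
  qed
  have tE: "t \<in> E" unfolding t_def by (rule Min_in[OF finE Ene])
  have tle: "t \<le> e" if "e \<in> E" for e unfolding t_def by (rule Min_le[OF finE that])
  have tpos: "0 < t" using tE E1pos E2pos unfolding E_def by blast
  define c' where "c' = (\<chi> k. if k \<in> A then c $ k + t else c $ k)"
  have c'k: "c' $ k = (if k \<in> A then c $ k + t else c $ k)" for k by (simp add: c'_def)
  have dich: "\<not> Tin r \<Longrightarrow> r \<in> mp_type v c k \<Longrightarrow> k \<notin> A" for r k
    using closed_dich[OF cl, of r] unfolding Tin_def by blast
  have F1a: "mx v c' r = mx v c r - t" if Tr: "Tin r" for r
  proof -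
    obtain k0 where k0: "v r $ k0 - c $ k0 = mx v c r" using mx_attain by blast
    then have "k0 \<in> A" using Tr unfolding Tin_def by (simp add: type_iff)
    show ?thesis
    proof (rule mx_eqI)
      fix k show "v r $ k - c' $ k \<le> mx v c r - t"
      proof (cases "k \<in> A")
        case True
        have "v r $ k - c $ k \<le> mx v c r" by (rule mx_ge)
        then show ?thesis using True by (simp add: c'k)
      next
        case False
        have "mx v c r - (v r $ k - c $ k) \<in> E1"
          unfolding E1_def by (rule image_eqI[where x="(r,k)"]) (use Tr False in simp_all)
        then have "t \<le> mx v c r - (v r $ k - c $ k)" using tle unfolding E_def by blast
        then show ?thesis using False by (simp add: c'k)
      qed
    next
      show "v r $ k0 - c' $ k0 = mx v c r - t" using k0 \<open>k0 \<in> A\<close> by (simp add: c'k)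
    qed
  qed
  have F1b: "mx v c' r = mx v c r" if Tr: "\<not> Tin r" for r
  proof -
    obtain k0 where k0: "v r $ k0 - c $ k0 = mx v c r" using mx_attain by blast
    then have "k0 \<notin> A" using dich[OF Tr] by (simp add: type_iff)
    show ?thesis
    proof (rule mx_eqI)
      fix k show "v r $ k - c' $ k \<le> mx v c r"
        using mx_ge[of v r k c] tpos by (simp add: c'k)
    next
      show "v r $ k0 - c' $ k0 = mx v c r" using k0 \<open>k0 \<notin> A\<close> by (simp add: c'k)
    qed
  qed
  have F2: "r \<in> mp_type v c' k" if "r \<in> mp_type v c k" for r k
  proof (cases "Tin r")
    case True
    then have "k \<in> A" using that unfolding Tin_def by blast
    then show ?thesis using that F1a[OF True] by (simp add: type_iff c'k)
  next
    case False
    then have "k \<notin> A" using that dich by blast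
    then show ?thesis using that F1b[OF False] by (simp add: type_iff c'k)
  qed
  have tszle: "tsz v c \<le> tsz v c'" by (rule tsz_mono[OF F2])
  have E1strict: "tsz v c < tsz v c'" if tE1: "t \<in> E1"
  proof -
    obtain r k where rk: "Tin r" "k \<notin> A" "t = mx v c r - (v r $ k - c $ k)"
      using tE1 unfolding E1_def by fastforce
    have "r \<notin> mp_type v c k" using rk(1,2) unfolding Tin_def by blast
    moreover have "r \<in> mp_type v c' k" using rk F1a[OF rk(1)] by (simp add: type_iff c'k)
    ultimately show ?thesis by (intro tsz_strict[OF F2]) 
  qed
  obtain m1 where m1: "m1 \<in> M" using yM_ne[OF Kne] unfolding M_def by blast
  have m1K: "m1 \<in> K" and m1v: "f m1 - c $ m1 = ym K f c" using m1 unfolding M_def yM_def by auto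
  show ?thesis
  proof (cases "M \<subseteq> A")
    case False
    then obtain m2 where m2: "m2 \<in> M" "m2 \<notin> A" by blast
    have m2K: "m2 \<in> K" and m2v: "f m2 - c $ m2 = ym K f c" using m2 unfolding M_def yM_def by auto
    have ym': "ym K f c' = ym K f c"
    proof (rule ym_eqI)
      fix k assume "k \<in> K"
      then show "f k - c' $ k \<le> ym K f c" using ym_ge[of k K f c] tpos by (simp add: c'k)
    next
      show "m2 \<in> K" by (rule m2K)
      show "f m2 - c' $ m2 = ym K f c" using m2v m2(2) by (simp add: c'k)
    qed
    have M'M: "yM K f c' \<subseteq> M"
    proof
      fix k assume "k \<in> yM K f c'"
      then have k: "k \<in> K" "f k - c' $ k = ym K f c" unfolding yM_def ym' by auto
      show "k \<in> M"
      proof (cases "k \<in> A")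
        case True
        then have "f k - c $ k = ym K f c + t" using k(2) by (simp add: c'k)
        then show ?thesis using ym_ge[OF k(1), of f c] tpos by simp
      next
        case False
        then show ?thesis using k unfolding M_def yM_def by (simp add: c'k)
      qed
    qed
    have "good v K f c'"
      unfolding good_def
    proof
      fix r
      obtain k where "r \<in> mp_type v c k" "k \<notin> M" using g unfolding good_def M_def by blast
      then show "\<exists>k. r \<in> mp_type v c' k \<and> k \<notin> yM K f c'" using F2 M'M by blast
    qed
    moreover have "t \<in> E1" using tE False unfolding E_def E2_def by simp
    then have "mu v K f c < mu v K f c'" by (intro mu_lt1 E1strict)
    ultimately show ?thesis by blast
  next
    case True
    then have allT: "\<forall>r k. r \<in> mp_type v c k \<longrightarrow> k \<in> A" using cs unfolding M_def by blast
    have ym': "ym K f c' = ym K f c - t"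
    proof (rule ym_eqI)
      fix k assume kK: "k \<in> K"
      show "f k - c' $ k \<le> ym K f c - t"
      proof (cases "k \<in> A")
        case True
        then show ?thesis using ym_ge[OF kK, of f c] by (simp add: c'k)
      next
        case False
        have "ym K f c - (f k - c $ k) \<in> E2"
          unfolding E2_def using \<open>M \<subseteq> A\<close> kK False by simp
        then have "t \<le> ym K f c - (f k - c $ k)" using tle unfolding E_def by blast
        then show ?thesis using False by (simp add: c'k)
      qed
    next
      show "m1 \<in> K" by (rule m1K)
      show "f m1 - c' $ m1 = ym K f c - t" using m1v m1 True by (auto simp: c'k)
    qed
    have MM': "M \<subseteq> yM K f c'"
    proof
      fix k assume k: "k \<in> M"
      then have "k \<in> A" "k \<in> K" "f k - c $ k = ym K f c" using True unfolding M_def yM_def by auto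
      then show "k \<in> yM K f c'" unfolding yM_def ym' by (simp add: c'k)
    qed
    have M'A: "k \<in> M" if "k \<in> A" "k \<in> yM K f c'" for k
    proof -
      have "k \<in> K" "f k - c' $ k = ym K f c - t" using that(2) unfolding yM_def ym' by auto
      then show ?thesis using that(1) unfolding M_def yM_def by (simp add: c'k)
    qed
    have "good v K f c'"
      unfolding good_def
    proof
      fix r
      obtain k where k: "r \<in> mp_type v c k" "k \<notin> M" using g unfolding good_def M_def by blast
      then have "k \<in> A" using allT by blast
      then have "k \<notin> yM K f c'" using M'A k(2) by blast
      then show "\<exists>k. r \<in> mp_type v c' k \<and> k \<notin> yM K f c'" using F2 k(1) by blast
    qed
    moreover have "mu v K f c < mu v K f c'"
    proof (cases "t \<in> E1")
      case True
      then show ?thesis by (intro mu_lt1 E1strict)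
    next
      case False
      then have "t \<in> E2" using tE unfolding E_def by blast
      then obtain k where k: "k \<in> K" "k \<notin> A" "t = ym K f c - (f k - c $ k)"
        using True unfolding E2_def by auto
      have "k \<in> yM K f c'" using k unfolding yM_def ym' by (simp add: c'k)
      moreover have "k \<notin> M" using k(2) True by blast
      ultimately have "M \<subset> yM K f c'" using MM' by blast
      then have "card M < card (yM K f c')" by (intro psubset_card_mono) simp
      then show ?thesis unfolding M_def by (intro mu_lt2 tszle)
    qed
    ultimately show ?thesis by blast
  qed
qed



lemma SUP_fin_attain:
  assumes "finite S" "S \<noteq> {}"
  shows "\<exists>x\<in>S. (SUP x\<in>S. g x) = (g x :: ereal)"
proof -
  have "Max (g ` S) = Sup (g ` S)" using assms by (intro Max_Sup) auto
  moreover have "Max (g ` S) \<in> g ` S" using assms by (intro Max_in) auto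
  ultimately show ?thesis by (metis (no_types, lifting) imageE)
qed

lemma SUP_fin_less:
  assumes "finite S" "\<And>x. x \<in> S \<Longrightarrow> g x < b" "-\<infinity> < (b::ereal)"
  shows "(SUP x\<in>S. g x) < b"
proof (cases "S = {}")
  case True then show ?thesis using assms(3) by (simp add: bot_ereal_def)
next
  case False
  then obtain x where "x \<in> S" "(SUP x\<in>S. g x) = g x" using SUP_fin_attain[OF assms(1)] by blast
  then show ?thesis using assms(2) by simp
qed

lemma init:
  fixes v :: "'p::finite \<Rightarrow> real^'n::finite" and y :: "ereal^'n"
  assumes y1: "y \<in> rmax_vec" and y2: "y \<notin> mp_cone v"
    and Kdef: "K = {k. y $ k \<noteq> -\<infinity>}" and fdef: "f = (\<lambda>k. real_of_ereal (y $ k))"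
  shows "K \<noteq> {} \<and> (\<exists>c. good v K f c)"
proof -
  have yinf: "y $ k \<noteq> \<infinity>" for k using y1 unfolding rmax_vec_def by simp
  have yK: "y $ k = ereal (f k)" if "k \<in> K" for k
    using that yinf[of k] unfolding Kdef fdef by (cases "y $ k") auto
  have ynK: "y $ k = -\<infinity>" if "k \<notin> K" for k using that unfolding Kdef by simp
  have Kne: "K \<noteq> {}"
  proof
    assume K0: "K = {}"
    have "y = (\<chi> k. SUP r. (\<lambda>_. -\<infinity>) r + ereal (v r $ k))"
    proof (rule vec_eq_iff[THEN iffD2], rule allI)
      fix k
      have "y $ k = -\<infinity>" using ynK K0 by blast
      then show "y $ k = (\<chi> k. SUP r. (\<lambda>_. -\<infinity>) r + ereal (v r $ k)) $ k" by simp
    qed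
    then have "y \<in> mp_cone v" unfolding mp_cone_def by (intro CollectI exI[of _ "\<lambda>_. -\<infinity>"]) simp
    then show False using y2 by simp
  qed
  have "\<exists>c. good v K f c"
  proof (cases "K = UNIV")
    case False
    then obtain k1 where k1: "k1 \<notin> K" by blast
    define B where "B = Max (range (\<lambda>q. \<bar>v (fst q) $ snd q\<bar>))"
    have Bge: "\<bar>v r $ k\<bar> \<le> B" for r k
      unfolding B_def by (rule Max_ge) (simp, rule image_eqI[where x="(r,k)"], simp_all)
    define c where "c = (\<chi> k. if k \<in> K then 0 else - (2 * B + 1))"
    have ck: "c $ k = (if k \<in> K then 0 else - (2 * B + 1))" for k by (simp add: c_def)
    have "good v K f c"
      unfolding good_def
    proof
      fix r
      obtain k0 where k0: "v r $ k0 - c $ k0 = mx v c r" using mx_attain by blast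
      have "k0 \<notin> K"
      proof
        assume "k0 \<in> K"
        then have "v r $ k0 - c $ k0 \<le> B" using Bge[of r k0] by (simp add: ck)
        moreover have "v r $ k1 - c $ k1 \<ge> B + 1" using Bge[of r k1] k1 by (simp add: ck)
        moreover have "v r $ k1 - c $ k1 \<le> mx v c r" by (rule mx_ge)
        ultimately show False using k0 by simp
      qed
      then have "k0 \<notin> yM K f c" unfolding yM_def by simp
      then show "\<exists>k. r \<in> mp_type v c k \<and> k \<notin> yM K f c" using k0 type_iff by blast
    qed
    then show ?thesis by blast
  next
    case True
    define lam0 where "lam0 r = Min (range (\<lambda>l. f l - v r $ l))" for r
    define z where "z k = Max (range (\<lambda>r. lam0 r + v r $ k))" for k
    have lam0_le: "lam0 r \<le> f l - v r $ l" for r l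
      unfolding lam0_def by (rule Min_le) simp_all
    have z_ge: "lam0 r + v r $ k \<le> z k" for r k
      unfolding z_def by (rule Max_ge) simp_all
    have z_le: "z k \<le> f k" for k
      unfolding z_def
    proof (subst Max_le_iff)
      show "\<forall>a\<in>range (\<lambda>r. lam0 r + v r $ k). a \<le> f k" using lam0_le by (auto simp: algebra_simps)
    qed simp_all
    have "\<exists>k2. z k2 \<noteq> f k2"
    proof (rule ccontr)
      assume "\<not> (\<exists>k2. z k2 \<noteq> f k2)"
      then have zf: "z k = f k" for k by blast
      have "y = (\<chi> k. SUP r. ereal (lam0 r) + ereal (v r $ k))"
      proof (rule vec_eq_iff[THEN iffD2], rule allI)
        fix k
        have "z k \<in> range (\<lambda>r. lam0 r + v r $ k)" unfolding z_def by (rule Max_in) simp_all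
        then obtain r1 where r1: "z k = lam0 r1 + v r1 $ k" by blast
        have "(SUP r. ereal (lam0 r) + ereal (v r $ k)) = ereal (z k)"
        proof (rule antisym)
          show "(SUP r. ereal (lam0 r) + ereal (v r $ k)) \<le> ereal (z k)"
            by (rule SUP_least) (simp add: z_ge)
          have "ereal (z k) = ereal (lam0 r1) + ereal (v r1 $ k)" using r1 by simp
          also have "\<dots> \<le> (SUP r. ereal (lam0 r) + ereal (v r $ k))" by (rule SUP_upper) simp
          finally show "ereal (z k) \<le> (SUP r. ereal (lam0 r) + ereal (v r $ k))" .
        qed
        then show "y $ k = (\<chi> k. SUP r. ereal (lam0 r) + ereal (v r $ k)) $ k"
          using yK[of k] True zf[of k] by simp
      qed
      then have "y \<in> mp_cone v" unfolding mp_cone_def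
        by (intro CollectI exI[of _ "\<lambda>r. ereal (lam0 r)"]) simp
      then show False using y2 by simp
    qed
    then obtain k2 where k2: "z k2 \<noteq> f k2" by blast
    then have k2lt: "z k2 < f k2" using z_le[of k2] by simp
    define c where "c = (\<chi> k. z k)"
    have ck: "c $ k = z k" for k by (simp add: c_def)
    have ympos: "0 < ym K f c"
    proof -
      have "f k2 - c $ k2 \<le> ym K f c" using True by (intro ym_ge) simp
      then show ?thesis using k2lt by (simp add: ck)
    qed
    have "good v K f c"
      unfolding good_def
    proof
      fix r
      have "lam0 r \<in> range (\<lambda>l. f l - v r $ l)" unfolding lam0_def by (rule Min_in) simp_all
      then obtain l where l: "lam0 r = f l - v r $ l" by blast
      have zl: "z l = f l" using z_ge[of r l] z_le[of l] l by simp
      have "mx v c r = - lam0 r"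
      proof (rule mx_eqI)
        fix k show "v r $ k - c $ k \<le> - lam0 r" using z_ge[of r k] by (simp add: ck)
      next
        show "v r $ l - c $ l = - lam0 r" using zl l by (simp add: ck)
      qed
      then have "r \<in> mp_type v c l" using zl l by (simp add: type_iff ck)
      moreover have "l \<notin> yM K f c" using zl ympos unfolding yM_def by (simp add: ck)
      ultimately show "\<exists>k. r \<in> mp_type v c k \<and> k \<notin> yM K f c" by blast
    qed
    then show ?thesis by blast
  qed
  then show ?thesis using Kne by blast
qed



lemma final:
  fixes v :: "'p::finite \<Rightarrow> real^'n::finite" and y :: "ereal^'n"
  assumes y1: "y \<in> rmax_vec"
    and Kdef: "K = {k. y $ k \<noteq> -\<infinity>}" and fdef: "f = (\<lambda>k. real_of_ereal (y $ k))"
    and Kne: "K \<noteq> {}" and g: "good v K f c"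
  shows "mp_cone v \<subseteq> mp_halfspace (yM K f c) (- yM K f c) (- c) \<and>
         y \<notin> mp_halfspace (yM K f c) (- yM K f c) (- c)"
proof -
  define M where "M = yM K f c"
  have yinf: "y $ k \<noteq> \<infinity>" for k using y1 unfolding rmax_vec_def by simp
  have yK: "y $ k = ereal (f k)" if "k \<in> K" for k
    using that yinf[of k] unfolding Kdef fdef by (cases "y $ k") auto
  have ynK: "y $ k = -\<infinity>" if "k \<notin> K" for k using that unfolding Kdef by simp
  have cone: "mp_cone v \<subseteq> mp_halfspace M (- M) (- c)"
  proof
    fix x assume "x \<in> mp_cone v"
    then obtain lam :: "'p \<Rightarrow> ereal" where lam: "\<forall>r. lam r \<noteq> \<infinity>"
      and xdef: "x = (\<chi> k. SUP r. lam r + ereal (v r $ k))" unfolding mp_cone_def by blast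
    have xk: "x $ k = (SUP r. lam r + ereal (v r $ k))" for k by (simp add: xdef)
    have attain: "\<exists>r. x $ k = lam r + ereal (v r $ k)" for k
      using SUP_fin_attain[of "UNIV :: 'p set" "\<lambda>r. lam r + ereal (v r $ k)"] xk[of k] by auto
    have upper: "lam r + ereal (v r $ k) \<le> x $ k" for r k
      unfolding xk by (rule SUP_upper) simp
    have "x \<in> rmax_vec"
      unfolding rmax_vec_def
    proof (rule CollectI, rule allI)
      fix k
      obtain r where "x $ k = lam r + ereal (v r $ k)" using attain by blast
      then show "x $ k \<noteq> \<infinity>" using lam by (cases "lam r") auto
    qed
    moreover have "(SUP i\<in>M. ereal ((- c) $ i) + x $ i) \<le> (SUP j\<in>- M. ereal ((- c) $ j) + x $ j)"
    proof (rule SUP_least)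
      fix i assume iM: "i \<in> M"
      obtain r where r: "x $ i = lam r + ereal (v r $ i)" using attain by blast
      obtain k where k: "r \<in> mp_type v c k" "k \<notin> M" using g unfolding good_def M_def by blast
      have le: "v r $ i - c $ i \<le> v r $ k - c $ k" using k(1) mx_ge[of v r i c] by (simp add: type_iff)
      have "ereal ((- c) $ i) + x $ i = ereal (- c $ i) + (lam r + ereal (v r $ i))" using r by simp
      also have "\<dots> \<le> ereal (- c $ k) + (lam r + ereal (v r $ k))"
        using lam le by (cases "lam r") auto
      also have "\<dots> \<le> ereal (- c $ k) + x $ k" by (rule add_left_mono[OF upper])
      also have "\<dots> = ereal ((- c) $ k) + x $ k" by simp
      also have "\<dots> \<le> (SUP j\<in>- M. ereal ((- c) $ j) + x $ j)" by (rule SUP_upper) (use k(2) in simp)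
      finally show "ereal ((- c) $ i) + x $ i \<le> (SUP j\<in>- M. ereal ((- c) $ j) + x $ j)" .
    qed
    ultimately show "x \<in> mp_halfspace M (- M) (- c)" unfolding mp_halfspace_def by blast
  qed
  have ynot: "y \<notin> mp_halfspace M (- M) (- c)"
  proof
    assume "y \<in> mp_halfspace M (- M) (- c)"
    then have le: "(SUP i\<in>M. ereal ((- c) $ i) + y $ i) \<le> (SUP j\<in>- M. ereal ((- c) $ j) + y $ j)"
      unfolding mp_halfspace_def by blast
    obtain m1 where m1: "m1 \<in> M" using yM_ne[OF Kne] unfolding M_def by blast
    have m1K: "m1 \<in> K" and m1v: "f m1 - c $ m1 = ym K f c" using m1 unfolding M_def yM_def by auto
    have "ereal (ym K f c) = ereal ((- c) $ m1) + y $ m1" using m1v yK[OF m1K] by simp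
    also have "\<dots> \<le> (SUP i\<in>M. ereal ((- c) $ i) + y $ i)" by (rule SUP_upper[OF m1])
    also have "\<dots> \<le> (SUP j\<in>- M. ereal ((- c) $ j) + y $ j)" by (rule le)
    also have "\<dots> < ereal (ym K f c)"
    proof (rule SUP_fin_less)
      fix j assume jM: "j \<in> - M"
      show "ereal ((- c) $ j) + y $ j < ereal (ym K f c)"
      proof (cases "j \<in> K")
        case True
        have "f j - c $ j \<le> ym K f c" by (rule ym_ge[OF True])
        moreover have "f j - c $ j \<noteq> ym K f c" using jM True unfolding M_def yM_def by simp
        ultimately show ?thesis using yK[OF True] by simp
      next
        case False
        then show ?thesis using ynK[OF False] by simp
      qed
    qed simp_all
    finally show False by simp
  qed
  show ?thesis using cone ynot unfolding M_def by blast
qed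

theorem proposition4p6:
  fixes v :: "'p::finite \<Rightarrow> real^'n::finite" and y :: "ereal^'n"
  assumes "y \<in> rmax_vec" and "y \<notin> mp_cone v"
  shows "\<exists>I J (a::real^'n). I \<inter> J = {} \<and> I \<union> J = UNIV \<and>
           mp_cone v \<subseteq> mp_halfspace I J a \<and> y \<notin> mp_halfspace I J a \<and>
           mp_vertex v (- a)"
proof -
  define K where "K = {k. y $ k \<noteq> -\<infinity>}"
  define f where "f = (\<lambda>k. real_of_ereal (y $ k))"
  have ini: "K \<noteq> {} \<and> (\<exists>c. good v K f c)" using init[OF assms K_def f_def] .
  then have Kne: "K \<noteq> {}" by blast
  define S where "S = (\<lambda>c. mu v K f c) ` {c. good v K f c}"
  have "S \<subseteq> {..(CARD('n) + 1) * (CARD('n) * CARD('p)) + CARD('n)}"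
  proof (rule subsetI)
    fix m assume "m \<in> S"
    then obtain c where "m = mu v K f c" unfolding S_def by blast
    then show "m \<in> {..(CARD('n) + 1) * (CARD('n) * CARD('p)) + CARD('n)}"
      using mu_bound[of v K f c] by simp
  qed
  then have finS: "finite S" by (rule finite_subset) simp
  obtain c0 where c0: "good v K f c0" using ini by blast
  have "mu v K f c0 \<in> S" unfolding S_def by (rule imageI) (simp add: c0)
  then have Sne: "S \<noteq> {}" by blast
  have "Max S \<in> S" by (rule Max_in[OF finS Sne])
  then obtain c where gc0: "c \<in> {c. good v K f c}" and mc0: "Max S = mu v K f c"
    unfolding S_def by (rule imageE)
  have gc: "good v K f c" using gc0 by simp
  have mc: "mu v K f c = Max S" using mc0 by simp
  have vert: "mp_vertex v c"
  proof (rule ccontr)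
    assume nv: "\<not> mp_vertex v c"
    obtain A where A0: "A \<noteq> {} \<and> A \<noteq> UNIV \<and> closedset v c A"
      using nonvertex_closed[OF nv] by (rule exE)
    have A: "A \<noteq> {}" "A \<noteq> UNIV" "closedset v c A" using A0 by simp_all
    obtain A' where A'0: "A' \<noteq> UNIV \<and> closedset v c A' \<and> (\<exists>r0. \<forall>k. r0 \<in> mp_type v c k \<longrightarrow> k \<in> A') \<and>
      (\<not> yM K f c \<subseteq> A' \<or> (yM K f c \<subseteq> A' \<and> (\<forall>r k. r \<in> mp_type v c k \<longrightarrow> k \<in> A')))"
      using choose[OF Kne A, of f] by (rule exE)
    obtain r0 where r0: "\<forall>k. r0 \<in> mp_type v c k \<longrightarrow> k \<in> A'" using A'0 by (elim conjE exE)
    have A'1: "A' \<noteq> UNIV" and A'2: "closedset v c A'"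
      and A'4: "\<not> yM K f c \<subseteq> A' \<or> (yM K f c \<subseteq> A' \<and> (\<forall>r k. r \<in> mp_type v c k \<longrightarrow> k \<in> A'))"
      using A'0 by simp_all
    note A' = A'1 A'2 r0 A'4
    obtain c' where c'0: "good v K f c' \<and> mu v K f c < mu v K f c'"
      using step[OF Kne gc A'(1) A'(2) A'(3) A'(4)] by (rule exE)
    have c': "good v K f c'" "mu v K f c < mu v K f c'" using c'0 by simp_all
    have "mu v K f c' \<in> S" unfolding S_def by (rule imageI) (simp add: c'(1))
    then have "mu v K f c' \<le> Max S" by (rule Max_ge[OF finS])
    then show False using c'(2) mc by simp
  qed
  have fin: "mp_cone v \<subseteq> mp_halfspace (yM K f c) (- yM K f c) (- c) \<and>
         y \<notin> mp_halfspace (yM K f c) (- yM K f c) (- c)"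
    by (rule final[OF assms(1) K_def f_def Kne gc])
  show ?thesis
  proof (intro exI conjI)
    show "yM K f c \<inter> - yM K f c = {}" by simp
    show "yM K f c \<union> - yM K f c = UNIV" by simp
    show "mp_cone v \<subseteq> mp_halfspace (yM K f c) (- yM K f c) (- c)" using fin by (elim conjE)
    show "y \<notin> mp_halfspace (yM K f c) (- yM K f c) (- c)" using fin by (elim conjE)
    show "mp_vertex v (- (- c))" using vert by simp
  qed
qed


end
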